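(* Let $(X,\mathcal{H},\lambda)$ be a homogenizer, $\Omega\subset X$ a nonempty open set (with the restriction of $\lambda$), and $A$ a closed vector subspace of $\Pi^\infty(X,\mathcal{H},\lambda)$ with the sup norm. For $u\in L^p(\Omega;A)$ let $\tilde u(x)=M(u(x))$, $x\in\Omega$, and $u^\varepsilon(x)=u(x,H_\varepsilon(x))$. Then: (i) for $u\in\mathcal{K}(\Omega;A)$ (continuous compactly supported maps $\Omega\to A$), $u^\varepsilon\to\tilde u$ weak-$*$ in $L^\infty(\Omega)$ as $\varepsilon\to\theta$; (ii) for $u\in L^p(\Omega;A)$ with $1\le p<+\infty$, $u^\varepsilon\to\tilde u$ weakly in $L^p(\Omega)$ as $\varepsilon\to\theta$.
   Context: An $\mathbb{R}$-group is an abelian group $E$ (operation written multiplicatively) whose underlying set is a subset of $\mathbb{R}$ containing all positive integers, such that: (RG1) with the natural order of $\mathbb{R}$, $E$ is a totally ordered group; (RG2) with the topology induced from $\mathbb{R}$, $E$ is a locally compact group; (RG3) there is a nonconstant continuous homomorphism $h:E\to\mathbb{R}_+^*$ such that for every $\alpha\in E$ the set $\{\varepsilon\in E:\varepsilon\ge\alpha\}$ is integrable for $h\cdot m$, $m$ a Haar measure on $E$. $e$ is the identity of $E$, $\varepsilon^{-1}$ the group inverse, $\theta=\inf E\in\mathbb{R}\cup\{\pm\infty\}$; inequalities refer to the order of $\mathbb{R}$. An action of $E$ on $X$ is a family $(H_\varepsilon)_{\varepsilon\in E}$ of bijections of $X$ with $H_\varepsilon\circ H_{\varepsilon'}=H_{\varepsilon\varepsilon'}$,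 $H_e=\mathrm{id}_X$; continuous if $(\varepsilon,x)\mapsto H_\varepsilon(x)$ is continuous on $E\times X$; absorptive if some $\omega\in X$ satisfies: for every neighbourhood $V$ of $\omega$ and every $x\in X$ there are a neighbourhood $U$ of $x$ and $\alpha\in E$ with $H_{\varepsilon^{-1}}(U)\subset V$ for all $\varepsilon\le\alpha$; this $\omega$ is unique, the center. A positive Radon measure $\lambda$ is $\mathcal{H}$-homogeneous if for each $\varepsilon$ there is $c(\varepsilon)>0$ with $\int\varphi(H_\varepsilon(x))d\lambda(x)=c(\varepsilon)\int\varphi\,d\lambda$ for all $\varphi\in\mathcal{K}(X)$; nontrivial if $\lambda\ne0$, $\lambda\ne\delta_\omega$. A homogenizer is a triple $(X,\mathcal{H},\lambda)$ with $X$ a noncompact locally compact space in which each point has a countable neighbourhood base, $\mathcal{H}$ a continuous absorptive action of an $\mathbb{R}$-group $E$ on $X$, $\lambda$ a nontrivial $\mathcal{H}$-homogeneous positive Radon measure; $X$ is equipped with $\lambda$. $\mathcal{B}(X)$ is the space of bounded continuous complex functions on $X$ with the sup norm. $\Pi^\infty(X,\mathcal{H},\lambda)$ is the space of $u\in\mathcal{B}(X)$ for which there is a constant $\tilde u\in\mathbb{C}$ with $u\circ H_\varepsilon\to\tilde u$ weak-$*$ in $L^\infty(X)$ as $\varepsilon\to\theta$; the mean value is $M(u)=\tilde u$. For $u\in L^p(\Omega;A)$, $u(x,y)$ denotes the value at $y\in X$ of $u(x)\in A$; the function $x\mapsto u(x,H_\varepsilon(x))$ is defined a.e. and lies in $L^p(\Omega)$.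 *)

theory Defs
  imports "HOL-Analysis.Analysis"
begin

definition grinv :: "real set \<Rightarrow> (real \<Rightarrow> real \<Rightarrow> real) \<Rightarrow> real \<Rightarrow> real \<Rightarrow> real" where
  "grinv E mul e x = (THE y. y \<in> E \<and> mul x y = e)"

definition abelian_group_on :: "real set \<Rightarrow> (real \<Rightarrow> real \<Rightarrow> real) \<Rightarrow> real \<Rightarrow> bool" where
  "abelian_group_on E mul e \<longleftrightarrow>
     e \<in> E \<and>
     (\<forall>a\<in>E. \<forall>b\<in>E. mul a b \<in> E) \<and>
     (\<forall>a\<in>E. \<forall>b\<in>E. \<forall>c\<in>E. mul (mul a b) c = mul a (mul b c)) \<and>
     (\<forall>a\<in>E. \<forall>b\<in>E. mul a b = mul b a) \<and>
     (\<forall>a\<in>E. mul e a = a) \<and>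
     (\<forall>a\<in>E. \<exists>b\<in>E. mul a b = e)"

definition haar_measure_on :: "real set \<Rightarrow> (real \<Rightarrow> real \<Rightarrow> real) \<Rightarrow> real measure \<Rightarrow> bool" where
  "haar_measure_on E mul m \<longleftrightarrow>
     sets m = sets (restrict_space borel E) \<and>
     (\<forall>K. compact K \<and> K \<subseteq> E \<longrightarrow> emeasure m K < \<infinity>) \<and>
     (\<forall>U. openin (top_of_set E) U \<and> U \<noteq> {} \<longrightarrow> emeasure m U > 0) \<and>
     (\<forall>a\<in>E. \<forall>B\<in>sets m. mul a ` B \<in> sets m \<and> emeasure m (mul a ` B) = emeasure m B)"

definition R_group :: "real set \<Rightarrow> (real \<Rightarrow> real \<Rightarrow> real) \<Rightarrow> real \<Rightarrow> bool" where
  "R_group E mul e \<longleftrightarrow>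
     abelian_group_on E mul e \<and>
     (\<forall>n::nat. n \<ge> 1 \<longrightarrow> real n \<in> E) \<and>
     \<comment> \<open>(RG1) totally ordered group for the natural order of the reals\<close>
     (\<forall>a\<in>E. \<forall>b\<in>E. \<forall>c\<in>E. a \<le> b \<longrightarrow> mul a c \<le> mul b c) \<and>
     \<comment> \<open>(RG2) locally compact topological group for the induced topology\<close>
     continuous_on (E \<times> E) (\<lambda>(a, b). mul a b) \<and>
     continuous_on E (grinv E mul e) \<and>
     locally compact E \<and>
     \<comment> \<open>(RG3)\<close>
     (\<exists>h :: real \<Rightarrow> real.
        continuous_on E h \<and> (\<forall>a\<in>E. h a > 0) \<and>
        (\<forall>a\<in>E. \<forall>b\<in>E. h (mul a b) = h a * h b) \<and>
        (\<exists>a\<in>E. \<exists>b\<in>E. h a \<noteq> h b) \<and>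
        (\<exists>m. haar_measure_on E mul m \<and>
           (\<forall>\<alpha>\<in>E. emeasure (density m (\<lambda>x. ennreal (h x))) {\<epsilon>\<in>E. \<alpha> \<le> \<epsilon>} < \<infinity>)))"

text \<open>The filter "\<epsilon> \<rightarrow> \<theta> = inf E" (within E).\<close>
definition to_theta :: "real set \<Rightarrow> real filter" where
  "to_theta E = (INF \<alpha>\<in>E. principal {\<epsilon>\<in>E. \<epsilon> \<le> \<alpha>})"

definition is_action :: "real set \<Rightarrow> (real \<Rightarrow> real \<Rightarrow> real) \<Rightarrow> real \<Rightarrow> (real \<Rightarrow> 'a \<Rightarrow> 'a) \<Rightarrow> bool" where
  "is_action E mul e H \<longleftrightarrow>
     (\<forall>\<epsilon>\<in>E. bij (H \<epsilon>)) \<and>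
     (\<forall>\<epsilon>\<in>E. \<forall>\<epsilon>'\<in>E. H \<epsilon> \<circ> H \<epsilon>' = H (mul \<epsilon> \<epsilon>')) \<and>
     H e = id"

definition is_center :: "real set \<Rightarrow> (real \<Rightarrow> real \<Rightarrow> real) \<Rightarrow> real \<Rightarrow> (real \<Rightarrow> 'a::topological_space \<Rightarrow> 'a) \<Rightarrow> 'a \<Rightarrow> bool" where
  "is_center E mul e H \<omega> \<longleftrightarrow>
     (\<forall>V. open V \<and> \<omega> \<in> V \<longrightarrow>
        (\<forall>x. \<exists>U \<alpha>. open U \<and> x \<in> U \<and> \<alpha> \<in> E \<and>
               (\<forall>\<epsilon>\<in>E. \<epsilon> \<le> \<alpha> \<longrightarrow> H (grinv E mul e \<epsilon>) ` U \<subseteq> V)))"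

definition center :: "real set \<Rightarrow> (real \<Rightarrow> real \<Rightarrow> real) \<Rightarrow> real \<Rightarrow> (real \<Rightarrow> 'a::topological_space \<Rightarrow> 'a) \<Rightarrow> 'a" where
  "center E mul e H = (THE \<omega>. is_center E mul e H \<omega>)"

definition absorptive :: "real set \<Rightarrow> (real \<Rightarrow> real \<Rightarrow> real) \<Rightarrow> real \<Rightarrow> (real \<Rightarrow> 'a::topological_space \<Rightarrow> 'a) \<Rightarrow> bool" where
  "absorptive E mul e H \<longleftrightarrow> (\<exists>\<omega>. is_center E mul e H \<omega>)"

definition Kc :: "('a::topological_space \<Rightarrow> complex) set" where
  "Kc = {\<phi>. continuous_on UNIV \<phi> \<and> (\<exists>K. compact K \<and> (\<forall>x. x \<notin> K \<longrightarrow> \<phi> x = 0))}"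

definition radon_measure :: "'a::topological_space measure \<Rightarrow> bool" where
  "radon_measure M \<longleftrightarrow>
     sets M = sets borel \<and>
     (\<forall>K. compact K \<longrightarrow> emeasure M K < \<infinity>) \<and>
     (\<forall>B\<in>sets borel. emeasure M B = (INF U\<in>{U. open U \<and> B \<subseteq> U}. emeasure M U)) \<and>
     (\<forall>U. open U \<longrightarrow> emeasure M U = (SUP K\<in>{K. compact K \<and> K \<subseteq> U}. emeasure M K))"

definition homogeneous :: "real set \<Rightarrow> (real \<Rightarrow> 'a::topological_space \<Rightarrow> 'a) \<Rightarrow> 'a measure \<Rightarrow> bool" where
  "homogeneous E H M \<longleftrightarrow>
     (\<forall>\<epsilon>\<in>E. \<exists>c::real. c > 0 \<and>
        (\<forall>\<phi>\<in>Kc. (LINT x|M. \<phi> (H \<epsilon> x)) = complex_of_real c * (LINT x|M. \<phi> x)))"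

definition homogenizer ::
  "real set \<Rightarrow> (real \<Rightarrow> real \<Rightarrow> real) \<Rightarrow> real \<Rightarrow> (real \<Rightarrow> 'a::{t2_space,first_countable_topology} \<Rightarrow> 'a)
    \<Rightarrow> 'a measure \<Rightarrow> bool" where
  "homogenizer E mul e H M \<longleftrightarrow>
     R_group E mul e \<and>
     locally compact (UNIV :: 'a set) \<and> \<not> compact (UNIV :: 'a set) \<and>
     is_action E mul e H \<and>
     continuous_on (E \<times> UNIV) (\<lambda>(\<epsilon>, x). H \<epsilon> x) \<and>
     absorptive E mul e H \<and>
     radon_measure M \<and> homogeneous E H M \<and>
     (\<exists>B\<in>sets M. emeasure M B \<noteq> 0) \<and>
     \<comment> \<open>M is not the Dirac measure at the center\<close>
     \<not> (\<forall>B\<in>sets M. emeasure M B = indicator B (center E mul e H))"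

definition wstar_tendsto :: "'a measure \<Rightarrow> ('i \<Rightarrow> 'a \<Rightarrow> complex) \<Rightarrow> ('a \<Rightarrow> complex) \<Rightarrow> 'i filter \<Rightarrow> bool" where
  "wstar_tendsto M f l F \<longleftrightarrow>
     (\<forall>g::'a \<Rightarrow> complex. integrable M g \<longrightarrow>
        ((\<lambda>i. LINT x|M. g x * f i x) \<longlongrightarrow> (LINT x|M. g x * l x)) F)"

definition Pi_inf :: "real set \<Rightarrow> (real \<Rightarrow> 'a::topological_space \<Rightarrow> 'a) \<Rightarrow> 'a measure \<Rightarrow> ('a \<Rightarrow>\<^sub>C complex) set" where
  "Pi_inf E H M = {u. \<exists>c::complex. wstar_tendsto M (\<lambda>\<epsilon> x. apply_bcontfun u (H \<epsilon> x)) (\<lambda>_. c) (to_theta E)}"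

definition mean_value :: "real set \<Rightarrow> (real \<Rightarrow> 'a::topological_space \<Rightarrow> 'a) \<Rightarrow> 'a measure \<Rightarrow> ('a \<Rightarrow>\<^sub>C complex) \<Rightarrow> complex" where
  "mean_value E H M u = (THE c. wstar_tendsto M (\<lambda>\<epsilon> x. apply_bcontfun u (H \<epsilon> x)) (\<lambda>_. c) (to_theta E))"

definition closed_complex_subspace :: "('a::topological_space \<Rightarrow>\<^sub>C complex) set \<Rightarrow> bool" where
  "closed_complex_subspace A \<longleftrightarrow>
     closed A \<and> 0 \<in> A \<and> (\<forall>u\<in>A. \<forall>v\<in>A. u + v \<in> A) \<and>
     (\<forall>u\<in>A. \<forall>c::complex. \<exists>v\<in>A. \<forall>y. apply_bcontfun v y = c * apply_bcontfun u y)"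

definition Kc_vec :: "'a::topological_space set \<Rightarrow> ('a \<Rightarrow>\<^sub>C complex) set \<Rightarrow> ('a \<Rightarrow> ('a \<Rightarrow>\<^sub>C complex)) set" where
  "Kc_vec \<Omega> A = {u. (\<forall>x\<in>\<Omega>. u x \<in> A) \<and> continuous_on \<Omega> u \<and>
                    (\<exists>K. compact K \<and> K \<subseteq> \<Omega> \<and> (\<forall>x\<in>\<Omega> - K. u x = 0))}"

text \<open>L^p(\<Omega>;A) (Bochner space), via a representative: strongly measurable
  (pointwise limit on \<Omega> of measurable simple functions), A-valued, p-integrable norm.\<close>
definition Lp_vec :: "'a::topological_space measure \<Rightarrow> real \<Rightarrow> ('a \<Rightarrow>\<^sub>C complex) set \<Rightarrow> ('a \<Rightarrow> ('a \<Rightarrow>\<^sub>C complex)) set" where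
  "Lp_vec M p A = {u. (\<forall>x\<in>space M. u x \<in> A) \<and>
       (\<exists>s :: nat \<Rightarrow> 'a \<Rightarrow> ('a \<Rightarrow>\<^sub>C complex).
          (\<forall>n. simple_function M (s n)) \<and> (\<forall>x\<in>space M. (\<lambda>n. s n x) \<longlonglongrightarrow> u x)) \<and>
       integrable M (\<lambda>x. norm (u x) powr p)}"

definition in_Lp :: "'a measure \<Rightarrow> real \<Rightarrow> ('a \<Rightarrow> complex) \<Rightarrow> bool" where
  "in_Lp M p f \<longleftrightarrow> f \<in> borel_measurable M \<and> integrable M (\<lambda>x. norm (f x) powr p)"

definition in_Lconj :: "'a measure \<Rightarrow> real \<Rightarrow> ('a \<Rightarrow> complex) \<Rightarrow> bool" where
  "in_Lconj M p g \<longleftrightarrow> g \<in> borel_measurable M \<and>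
     (if p = 1 then (\<exists>C. AE x in M. norm (g x) \<le> C)
      else integrable M (\<lambda>x. norm (g x) powr (p / (p - 1))))"

definition weak_Lp_tendsto :: "'a measure \<Rightarrow> real \<Rightarrow> ('i \<Rightarrow> 'a \<Rightarrow> complex) \<Rightarrow> ('a \<Rightarrow> complex) \<Rightarrow> 'i filter \<Rightarrow> bool" where
  "weak_Lp_tendsto M p f l F \<longleftrightarrow>
     (\<forall>g. in_Lconj M p g \<longrightarrow>
        ((\<lambda>i. LINT x|M. f i x * g x) \<longlongrightarrow> (LINT x|M. l x * g x)) F)"

end

theory Submission
  imports Defs
begin

fun sel :: "real \<Rightarrow> 'b list \<Rightarrow> 'b \<Rightarrow> 'b::{metric_space,zero}" where
  "sel \<eta> [] y = 0"
| "sel \<eta> (c # cs) y = (if dist y c < \<eta> then c else sel \<eta> cs y)"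

lemma sel_in: "sel \<eta> cs y \<in> insert 0 (set cs)"
  by (induction cs) auto

lemma sel_dist: "\<exists>c\<in>set cs. dist y c < \<eta> \<Longrightarrow> dist (sel \<eta> cs y) y < \<eta>"
  by (induction cs) (auto simp: dist_commute)

lemma sel_meas: "(\<lambda>y. sel \<eta> cs y) \<in> borel_measurable borel"
proof (induction cs)
  case (Cons c cs)
  have e: "{y. dist y c < \<eta>} = ball c \<eta>" by (auto simp: ball_def dist_commute)
  have o: "{y. dist y c < \<eta>} \<inter> space borel \<in> sets borel"
    unfolding e space_borel Int_UNIV_right by (rule borel_open[OF open_ball])
  have "(\<lambda>y. if y \<in> {y. dist y c < \<eta>} then c else sel \<eta> cs y) \<in> borel_measurable borel"
  proof (rule measurable_If_set[OF measurable_const Cons])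
    show "c \<in> space borel" by simp
  qed (rule o)
  then show ?case by simp
qed simp

lemma simple_function_borelI:
  fixes f :: "'b \<Rightarrow> 'c::t1_space"
  assumes "f \<in> borel_measurable N" "finite (f ` space N)"
  shows "simple_function N f"
  unfolding simple_function_def
proof (intro conjI ballI assms(2))
  fix c assume "c \<in> f ` space N"
  show "f -` {c} \<inter> space N \<in> sets N"
    by (rule measurable_sets[OF assms(1)]) (simp add: borel_closed)
qed

lemma young_simple:
  fixes a b p q :: real
  assumes "p > 1" "q = p / (p - 1)" "a \<ge> 0" "b \<ge> 0"
  shows "a * b \<le> a powr q + b powr p"
proof -
  have q1: "q > 1" unfolding assms(2) using assms(1) by (simp add: less_divide_eq)
  have s: "1/q + 1/p = 1" unfolding assms(2) using assms(1) by (simp add: field_simps)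
  have "a * b \<le> a powr q / q + b powr p / p"
    by (rule Youngs_inequality[OF q1 assms(1) s assms(3,4)])
  also have "a powr q / q \<le> a powr q" using mult_left_mono[of 1 q "a powr q"] q1 by (simp add: divide_le_eq)
  also have "b powr p / p \<le> b powr p" using mult_left_mono[of 1 p "b powr p"] assms(1) by (simp add: divide_le_eq)
  finally show ?thesis by simp
qed

lemma LC:
  fixes g :: "'b \<Rightarrow> complex" and f :: "'b \<Rightarrow> real"
  assumes p: "1 \<le> p" and g: "in_Lconj N p g" and f: "f \<in> borel_measurable N" "\<And>x. x \<in> space N \<Longrightarrow> 0 \<le> f x"
    and fi: "integrable N (\<lambda>x. f x powr p)"
  shows "integrable N (\<lambda>x. norm (g x) * f x)"
proof -
  have gm: "g \<in> borel_measurable N" using g by (simp add: in_Lconj_def)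
  have m: "(\<lambda>x. norm (g x) * f x) \<in> borel_measurable N" using gm f(1) by measurable
  show ?thesis
  proof (cases "p = 1")
    case True
    then obtain C where C: "AE x in N. norm (g x) \<le> C" using g by (auto simp: in_Lconj_def)
    have fi1: "integrable N f"
    proof -
      have "integrable N (\<lambda>x. f x powr p) \<longleftrightarrow> integrable N f"
        by (rule Bochner_Integration.integrable_cong) (use True f(2) in auto)
      then show ?thesis using fi by simp
    qed
    show ?thesis
    proof (rule Bochner_Integration.integrable_bound[where f="\<lambda>x. C * f x"])
      show "integrable N (\<lambda>x. C * f x)" using fi1 by simp
      show "AE x in N. norm (norm (g x) * f x) \<le> norm (C * f x)"
        using C AE_space
      proof eventually_elim
        case (elim x)
        then have "norm (g x) * f x \<le> C * f x" using f(2) by (simp add: mult_right_mono)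
        moreover have "C * f x \<le> \<bar>C\<bar> * f x" using f(2)[OF elim(2)] by (rule mult_right_mono[OF abs_ge_self])
        ultimately show ?case using f(2)[OF elim(2)] by (simp add: abs_mult)
      qed
    qed (rule m)
  next
    case False
    then have p1: "p > 1" using p by simp
    define q where "q = p / (p - 1)"
    have gi: "integrable N (\<lambda>x. norm (g x) powr q)" using g False by (simp add: in_Lconj_def q_def)
    show ?thesis
    proof (rule Bochner_Integration.integrable_bound[where f="\<lambda>x. norm (g x) powr q + f x powr p"])
      show "integrable N (\<lambda>x. norm (g x) powr q + f x powr p)" using gi fi by simp
      show "AE x in N. norm (norm (g x) * f x) \<le> norm (norm (g x) powr q + f x powr p)"
      proof (rule AE_I2)
        fix x assume x: "x \<in> space N"
        have "norm (g x) * f x \<le> norm (g x) powr q + f x powr p"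
          by (rule young_simple[OF p1 q_def norm_ge_zero f(2)[OF x]])
        then show "norm (norm (g x) * f x) \<le> norm (norm (g x) powr q + f x powr p)"
          using f(2)[OF x] by (simp add: abs_mult)
      qed
    qed (rule m)
  qed
qed

lemma near_point:
  fixes A :: "'b::metric_space set"
  assumes "A \<noteq> {}" "\<delta> > 0"
  shows "\<exists>a\<in>A. dist a c < infdist c A + \<delta>"
proof -
  have bdd: "bdd_below ((\<lambda>a. dist c a) ` A)" by (rule bdd_belowI[of _ 0]) auto
  have "(INF a\<in>A. dist c a) < infdist c A + \<delta>" using assms by (simp add: infdist_notempty)
  then obtain a where "a \<in> A" "dist c a < infdist c A + \<delta>"
    using cINF_less_iff[OF assms(1) bdd] by blast
  then show ?thesis by (auto simp: dist_commute)
qed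

locale PS =
  fixes E :: "real set" and mul :: "real \<Rightarrow> real \<Rightarrow> real" and e :: real
    and H :: "real \<Rightarrow> 'a::{t2_space,first_countable_topology} \<Rightarrow> 'a"
    and lam :: "'a measure" and \<Omega> :: "'a set" and A :: "('a \<Rightarrow>\<^sub>C complex) set"
  assumes hom: "homogenizer E mul e H lam"
    and \<Omega>open: "open \<Omega>"
    and Asub: "closed_complex_subspace A" and APi: "A \<subseteq> Pi_inf E H lam"
begin

abbreviation "F \<equiv> to_theta E"
abbreviation "Mv \<equiv> mean_value E H lam"
abbreviation "MM \<equiv> restrict_space lam \<Omega>"

lemma radon: "radon_measure lam" using hom by (simp add: homogenizer_def)
lemma sets_lam: "sets lam = sets borel" using radon unfolding radon_measure_def by (elim conjE)
lemma radon_compact': "\<forall>K. compact K \<longrightarrow> emeasure lam K < \<infinity>"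
  using radon unfolding radon_measure_def by (elim conjE)
lemma radon_inner': "\<forall>U. open U \<longrightarrow> emeasure lam U = (SUP K\<in>{K. compact K \<and> K \<subseteq> U}. emeasure lam K)"
  using radon unfolding radon_measure_def by (elim conjE)
lemma radon_compact: "compact K \<Longrightarrow> emeasure lam K < \<infinity>"
  using radon_compact' by blast
lemma radon_inner: "open U \<Longrightarrow> emeasure lam U = (SUP K\<in>{K. compact K \<and> K \<subseteq> U}. emeasure lam K)"
  using radon_inner' by blast
lemma space_lam[simp]: "space lam = UNIV"
  using sets_eq_imp_space_eq[OF sets_lam] by simp
lemma Omega_sets: "\<Omega> \<in> sets lam" using sets_lam \<Omega>open by simp
lemma space_MM[simp]: "space MM = \<Omega>" by (simp add: space_restrict_space)
lemma sets_MM: "sets MM = sets (restrict_space borel \<Omega>)"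
  by (rule sets_restrict_space_cong[OF sets_lam])

lemma one_in_E: "1 \<in> E"
  using hom unfolding homogenizer_def R_group_def by (metis of_nat_1 order_refl)

lemma Eprops: "abelian_group_on E mul e"
  using hom unfolding homogenizer_def R_group_def by blast

lemma eventually_F: "eventually P F \<longleftrightarrow> (\<exists>b\<in>E. \<forall>\<epsilon>\<in>E. \<epsilon> \<le> b \<longrightarrow> P \<epsilon>)"
  unfolding to_theta_def
proof (subst eventually_INF_base)
  show "E \<noteq> {}" using one_in_E by auto
  show "\<And>a b. a \<in> E \<Longrightarrow> b \<in> E \<Longrightarrow> \<exists>x\<in>E. principal {\<epsilon> \<in> E. \<epsilon> \<le> x} \<le> inf (principal {\<epsilon> \<in> E. \<epsilon> \<le> a}) (principal {\<epsilon> \<in> E. \<epsilon> \<le> b})"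
    by (rule_tac x="min a b" in bexI) (auto simp: min_def)
qed (auto simp: eventually_principal)

lemma F_nonbot: "F \<noteq> bot"
  unfolding trivial_limit_def eventually_F by auto

lemma eventually_in_E: "eventually (\<lambda>\<epsilon>. \<epsilon> \<in> E) F"
  unfolding eventually_F using one_in_E by auto

lemma H_cont: assumes "\<epsilon> \<in> E" shows "continuous_on UNIV (H \<epsilon>)"
proof -
  have c: "continuous_on (E \<times> UNIV) (\<lambda>(\<epsilon>, x). H \<epsilon> x)" using hom by (simp add: homogenizer_def)
  have "continuous_on UNIV ((\<lambda>(\<epsilon>, x). H \<epsilon> x) \<circ> (\<lambda>x. (\<epsilon>, x)))"
    by (rule continuous_on_compose) (auto intro!: continuous_intros continuous_on_subset[OF c] simp: assms)
  then show ?thesis by (simp add: o_def)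
qed

lemma cont_meas_lam: "continuous_on UNIV f \<Longrightarrow> f \<in> borel_measurable lam"
  using borel_measurable_continuous_onI measurable_cong_sets[OF sets_lam refl] by blast

lemma cont_meas_MM: "continuous_on \<Omega> f \<Longrightarrow> f \<in> borel_measurable MM"
  using borel_measurable_continuous_on_restrict measurable_cong_sets[OF sets_MM refl] by blast

lemma aeps_meas_lam: "\<epsilon> \<in> E \<Longrightarrow> (\<lambda>x. apply_bcontfun a (H \<epsilon> x)) \<in> borel_measurable lam"
  by (rule cont_meas_lam, rule continuous_on_compose2[OF continuous_on_apply_bcontfun H_cont]) auto

lemma aeps_meas_MM: "\<epsilon> \<in> E \<Longrightarrow> (\<lambda>x. apply_bcontfun a (H \<epsilon> x)) \<in> borel_measurable MM"
  by (rule measurable_restrict_space1, rule aeps_meas_lam)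

lemma pos_compact: obtains K where "K \<in> sets lam" "0 < measure lam K" "emeasure lam K < \<infinity>"
proof -
  have "\<exists>B\<in>sets lam. emeasure lam B \<noteq> 0" using hom unfolding homogenizer_def by (elim conjE)
  then obtain B where B: "B \<in> sets lam" "emeasure lam B \<noteq> 0" by blast
  have "emeasure lam B \<le> emeasure lam UNIV"
    using B by (intro emeasure_mono) (auto simp: sets_lam)
  also have "\<dots> = (SUP K\<in>{K. compact K \<and> K \<subseteq> UNIV}. emeasure lam K)"
    by (rule radon_inner[OF open_UNIV])
  finally have "0 < (SUP K\<in>{K. compact K \<and> K \<subseteq> UNIV}. emeasure lam K)"
    using B(2) by (metis order_less_le_trans not_gr_zero)
  then obtain K where K: "compact K" "0 < emeasure lam K" by (auto simp: less_SUP_iff)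
  have fin: "emeasure lam K < \<infinity>" using radon_compact K by simp
  have KS: "K \<in> sets lam" using K compact_imp_closed sets_lam borel_closed by metis
  have "0 < measure lam K" using K fin
    by (simp add: measure_def enn2real_positive_iff)
  then show ?thesis using that KS fin by blast
qed

lemma wstar_unique:
  assumes "wstar_tendsto lam f (\<lambda>_. c1) F" "wstar_tendsto lam f (\<lambda>_. c2) F"
  shows "c1 = c2"
proof -
  obtain K where K: "K \<in> sets lam" "0 < measure lam K" and fin: "emeasure lam K < \<infinity>" by (rule pos_compact)
  let ?g = "\<lambda>x. indicator K x *\<^sub>R (1::complex)"
  have gi: "integrable lam ?g"
    using K fin by (intro integrable_scaleR_left) (simp add: integrable_indicator_iff)
  have eq: "(LINT x|lam. ?g x * c) = measure lam K *\<^sub>R c" for c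
  proof -
    have "(LINT x|lam. ?g x * c) = (LINT x|lam. indicator K x *\<^sub>R c)"
      by (simp add: scaleR_conv_of_real)
    also have "\<dots> = (LINT x|lam. indicator K x) *\<^sub>R c"
      using K fin by (intro integral_scaleR_left) (simp add: integrable_indicator_iff)
    also have "\<dots> = measure lam K *\<^sub>R c" using K by simp
    finally show ?thesis .
  qed
  have l1: "((\<lambda>\<epsilon>. LINT x|lam. ?g x * f \<epsilon> x) \<longlongrightarrow> (LINT x|lam. ?g x * c1)) F"
    using assms(1)[unfolded wstar_tendsto_def, rule_format, OF gi] .
  have l2: "((\<lambda>\<epsilon>. LINT x|lam. ?g x * f \<epsilon> x) \<longlongrightarrow> (LINT x|lam. ?g x * c2)) F"
    using assms(2)[unfolded wstar_tendsto_def, rule_format, OF gi] .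
  have "measure lam K *\<^sub>R c1 = measure lam K *\<^sub>R c2"
    using tendsto_unique[OF F_nonbot l1 l2] unfolding eq .
  then show ?thesis using K(2) by simp
qed

lemma wstar_Mv: assumes "a \<in> A"
  shows "wstar_tendsto lam (\<lambda>\<epsilon> x. apply_bcontfun a (H \<epsilon> x)) (\<lambda>_. Mv a) F"
proof -
  have "a \<in> Pi_inf E H lam" using assms APi by blast
  then obtain c where c: "wstar_tendsto lam (\<lambda>\<epsilon> x. apply_bcontfun a (H \<epsilon> x)) (\<lambda>_. c) F"
    unfolding Pi_inf_def by blast
  have "Mv a = c" unfolding mean_value_def
  proof (rule the_equality)
    fix c' assume "wstar_tendsto lam (\<lambda>\<epsilon> x. apply_bcontfun a (H \<epsilon> x)) (\<lambda>_. c') F"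
    then show "c' = c" by (rule wstar_unique[OF _ c])
  qed (rule c)
  then show ?thesis using c by simp
qed

lemma int_bounded:
  fixes g f :: "'b \<Rightarrow> complex"
  assumes "integrable N g" "f \<in> borel_measurable N" "\<And>x. x \<in> space N \<Longrightarrow> norm (f x) \<le> B"
  shows "integrable N (\<lambda>x. g x * f x)"
proof (rule Bochner_Integration.integrable_bound[where f="\<lambda>x. of_real B * g x"])
  show "integrable N (\<lambda>x. of_real B * g x)" using assms(1) by simp
  show "(\<lambda>x. g x * f x) \<in> borel_measurable N" using assms(1,2) by measurable
  have "B \<ge> 0" if "x \<in> space N" for x using assms(3)[OF that] norm_ge_zero order_trans by blast
  then show "AE x in N. norm (g x * f x) \<le> norm (of_real B * g x)"
    using assms(3) by (intro AE_I2) (auto simp: norm_mult abs_of_nonneg mult.commute intro: mult_right_mono)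
qed

lemma wstar_MM: assumes "a \<in> A" "integrable MM g"
  shows "((\<lambda>\<epsilon>. LINT x|MM. g x * apply_bcontfun a (H \<epsilon> x)) \<longlongrightarrow> (LINT x|MM. g x * Mv a)) F"
proof -
  have OS: "\<Omega> \<inter> space lam \<in> sets lam" using Omega_sets by simp
  let ?g = "\<lambda>x. indicator \<Omega> x *\<^sub>R g x"
  have gi: "integrable lam ?g" using assms(2) integrable_restrict_space[OF OS] by blast
  have eq: "(LINT x|MM. g x * c x) = (LINT x|lam. ?g x * c x)" for c
    by (subst integral_restrict_space[OF OS]) (simp add: scaleR_conv_of_real mult.assoc)
  show ?thesis unfolding eq by (rule wstar_Mv[OF assms(1), unfolded wstar_tendsto_def, rule_format, OF gi])
qed

lemma A_zero: "0 \<in> A" using Asub by (simp add: closed_complex_subspace_def)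
lemma A_closed: "closed A" using Asub by (simp add: closed_complex_subspace_def)
lemma A_neg: "b \<in> A \<Longrightarrow> - b \<in> A"
proof -
  assume b: "b \<in> A"
  then obtain v where v: "v \<in> A" "\<And>y. apply_bcontfun v y = (-1) * apply_bcontfun b y"
    using Asub unfolding closed_complex_subspace_def by blast
  have "v = - b" by (rule bcontfun_eqI) (simp add: v)
  then show ?thesis using v by simp
qed
lemma A_add: "a \<in> A \<Longrightarrow> b \<in> A \<Longrightarrow> a + b \<in> A"
  using Asub unfolding closed_complex_subspace_def by blast
lemma A_diff: "a \<in> A \<Longrightarrow> b \<in> A \<Longrightarrow> a - b \<in> A"
  using A_add[OF _ A_neg] by (metis diff_conv_add_uminus)

lemma bcf_norm: "norm (apply_bcontfun a y) \<le> norm (a :: 'a \<Rightarrow>\<^sub>C complex)"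
  by (rule norm_bounded)

lemma Mv_zero: "Mv 0 = 0"
proof -
  have "wstar_tendsto lam (\<lambda>\<epsilon> x. apply_bcontfun 0 (H \<epsilon> x)) (\<lambda>_. 0) F"
    by (simp add: wstar_tendsto_def)
  then show ?thesis by (rule wstar_unique[OF wstar_Mv[OF A_zero]])
qed

lemma Mv_diff: assumes "a \<in> A" "b \<in> A" shows "Mv (a - b) = Mv a - Mv b"
proof -
  have "wstar_tendsto lam (\<lambda>\<epsilon> x. apply_bcontfun (a - b) (H \<epsilon> x)) (\<lambda>_. Mv a - Mv b) F"
    unfolding wstar_tendsto_def
  proof (intro allI impI)
    fix g :: "'a \<Rightarrow> complex" assume g: "integrable lam g"
    have ia: "integrable lam (\<lambda>x. g x * apply_bcontfun c (H \<epsilon> x))" if "\<epsilon> \<in> E" for c \<epsilon>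
      by (rule int_bounded[OF g aeps_meas_lam[OF that] bcf_norm])
    have lim: "((\<lambda>\<epsilon>. (LINT x|lam. g x * apply_bcontfun a (H \<epsilon> x)) - (LINT x|lam. g x * apply_bcontfun b (H \<epsilon> x)))
       \<longlongrightarrow> (LINT x|lam. g x * Mv a) - (LINT x|lam. g x * Mv b)) F"
      using wstar_Mv[OF assms(1)] wstar_Mv[OF assms(2)] g unfolding wstar_tendsto_def
      by (intro tendsto_diff) auto
    have ev: "eventually (\<lambda>\<epsilon>. (LINT x|lam. g x * apply_bcontfun a (H \<epsilon> x)) - (LINT x|lam. g x * apply_bcontfun b (H \<epsilon> x))
        = (LINT x|lam. g x * apply_bcontfun (a - b) (H \<epsilon> x))) F"
      using eventually_in_E
    proof eventually_elim
      case (elim \<epsilon>)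
      then show ?case using ia[OF elim, of a] ia[OF elim, of b]
        by (simp add: right_diff_distrib)
    qed
    have eq: "(LINT x|lam. g x * Mv a) - (LINT x|lam. g x * Mv b) = (LINT x|lam. g x * (Mv a - Mv b))"
      using g by (simp add: right_diff_distrib)
    show "((\<lambda>\<epsilon>. LINT x|lam. g x * apply_bcontfun (a - b) (H \<epsilon> x)) \<longlongrightarrow> (LINT x|lam. g x * (Mv a - Mv b))) F"
      using Lim_transform_eventually[OF lim ev] unfolding eq .
  qed
  then show ?thesis by (rule wstar_unique[OF wstar_Mv[OF A_diff[OF assms]]])
qed

lemma Mv_bound: assumes "d \<in> A" shows "norm (Mv d) \<le> norm d"
proof -
  obtain K where K: "K \<in> sets lam" "0 < measure lam K" and fin: "emeasure lam K < \<infinity>" by (rule pos_compact)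
  let ?g = "\<lambda>x. indicator K x *\<^sub>R (1::complex)"
  have ii: "integrable lam (indicator K :: _ \<Rightarrow> real)" using K fin by (simp add: integrable_indicator_iff)
  have gi: "integrable lam ?g" using ii by (intro integrable_scaleR_left) auto
  have eq: "(LINT x|lam. ?g x * c) = measure lam K *\<^sub>R c" for c
  proof -
    have "(LINT x|lam. ?g x * c) = (LINT x|lam. indicator K x *\<^sub>R c)"
      by (simp add: scaleR_conv_of_real)
    also have "\<dots> = (LINT x|lam. indicator K x) *\<^sub>R c"
      using ii by (intro integral_scaleR_left) auto
    also have "\<dots> = measure lam K *\<^sub>R c" using K by simp
    finally show ?thesis .
  qed
  have lim: "((\<lambda>\<epsilon>. norm (LINT x|lam. ?g x * apply_bcontfun d (H \<epsilon> x))) \<longlongrightarrow> norm (measure lam K *\<^sub>R Mv d)) F"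
    using tendsto_norm[OF wstar_Mv[OF assms, unfolded wstar_tendsto_def, rule_format, OF gi]] unfolding eq .
  have "eventually (\<lambda>\<epsilon>. norm (LINT x|lam. ?g x * apply_bcontfun d (H \<epsilon> x)) \<le> measure lam K * norm d) F"
    using eventually_in_E
  proof eventually_elim
    case (elim \<epsilon>)
    have "norm (LINT x|lam. ?g x * apply_bcontfun d (H \<epsilon> x)) \<le> (LINT x|lam. norm (?g x * apply_bcontfun d (H \<epsilon> x)))"
      by (rule integral_norm_bound)
    also have "\<dots> \<le> (LINT x|lam. indicator K x * norm d)"
    proof (rule integral_mono)
      show "integrable lam (\<lambda>x. norm (?g x * apply_bcontfun d (H \<epsilon> x)))"
        by (intro integrable_norm int_bounded[OF gi aeps_meas_lam[OF elim] bcf_norm])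
      show "integrable lam (\<lambda>x. indicator K x * norm d)" using ii by simp
      show "norm (?g x * apply_bcontfun d (H \<epsilon> x)) \<le> indicator K x * norm d" for x
      proof (cases "x \<in> K")
        case True then show ?thesis using bcf_norm[of d "H \<epsilon> x"] by simp
      qed simp
    qed
    also have "\<dots> = (LINT x|lam. indicator K x) * norm d" by (rule integral_mult_left_zero)
    also have "\<dots> = measure lam K * norm d" using K by simp
    finally show ?case .
  qed
  then have "norm (measure lam K *\<^sub>R Mv d) \<le> measure lam K * norm d"
    by (rule tendsto_upperbound[OF lim _ F_nonbot])
  then have "measure lam K * norm (Mv d) \<le> measure lam K * norm d" using K(2) by simp
  then show ?thesis using K(2) mult_le_cancel_left_pos by blast
qed

lemma Mv_lip: assumes "a \<in> A" "b \<in> A" shows "norm (Mv a - Mv b) \<le> dist a b"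
  using Mv_bound[OF A_diff[OF assms]] Mv_diff[OF assms] by (simp add: dist_norm)

lemma tendsto_approx:
  fixes f :: "'i \<Rightarrow> 'b::real_normed_vector"
  assumes "\<And>\<eta>. \<eta> > 0 \<Longrightarrow> \<exists>fa La. (fa \<longlongrightarrow> La) G \<and> eventually (\<lambda>i. norm (f i - fa i) \<le> \<eta>) G \<and> norm (L - La) \<le> \<eta>"
  shows "(f \<longlongrightarrow> L) G"
proof (rule tendstoI)
  fix r :: real assume r: "r > 0"
  then obtain fa La where fa: "(fa \<longlongrightarrow> La) G" "eventually (\<lambda>i. norm (f i - fa i) \<le> r/4) G" "norm (L - La) \<le> r/4"
    using assms[of "r/4"] by auto
  have "eventually (\<lambda>i. dist (fa i) La < r/4) G" using fa(1) r by (intro tendstoD) auto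
  with fa(2) show "eventually (\<lambda>i. dist (f i) L < r) G"
  proof eventually_elim
    case (elim i)
    have e: "f i - L = ((f i - fa i) + (fa i - La)) + (La - L)" by simp
    have "norm (f i - L) \<le> norm ((f i - fa i) + (fa i - La)) + norm (La - L)"
      unfolding e by (rule norm_triangle_ineq)
    also have "\<dots> \<le> norm (f i - fa i) + norm (fa i - La) + norm (La - L)"
      using norm_triangle_ineq[of "f i - fa i" "fa i - La"] by simp
    finally have "dist (f i) L \<le> norm (f i - fa i) + dist (fa i) La + norm (L - La)"
      by (simp add: dist_norm norm_minus_commute)
    then show ?case using elim fa(3) r by linarith
  qed
qed

lemma simple_rep:
  fixes \<phi> :: "'c \<Rightarrow> 'b \<Rightarrow> 'd::real_normed_vector"
  assumes "simple_function N v" "x \<in> space N"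
  shows "\<phi> (v x) x = (\<Sum>c\<in>v ` space N. indicator {y\<in>space N. v y = c} x *\<^sub>R \<phi> c x)"
proof -
  have "(\<Sum>c\<in>v ` space N. indicator {y\<in>space N. v y = c} x *\<^sub>R \<phi> c x) = (\<Sum>c\<in>v ` space N. if v x = c then \<phi> c x else 0)"
    using assms(2) by (intro sum.cong) (auto split: split_indicator)
  also have "\<dots> = \<phi> (v x) x" using assms simple_functionD(1)[OF assms(1)] by (simp add: sum.delta)
  finally show ?thesis by simp
qed

lemma simple_rep0:
  fixes \<phi> :: "'c::zero \<Rightarrow> 'b \<Rightarrow> 'd::real_normed_vector"
  assumes "simple_function N v" "x \<in> space N" "\<phi> 0 x = 0"
  shows "\<phi> (v x) x = (\<Sum>c\<in>v ` space N - {0}. indicator {y\<in>space N. v y = c} x *\<^sub>R \<phi> c x)"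
proof -
  have "(\<Sum>c\<in>v ` space N - {0}. indicator {y\<in>space N. v y = c} x *\<^sub>R \<phi> c x) = (\<Sum>c\<in>v ` space N - {0}. if v x = c then \<phi> c x else 0)"
    using assms(2) by (intro sum.cong) (auto split: split_indicator)
  also have "\<dots> = \<phi> (v x) x" using assms simple_functionD(1)[OF assms(1)] by (cases "v x = 0") (simp_all add: sum.delta)
  finally show ?thesis by simp
qed

lemma simple_meas:
  fixes \<phi> :: "'c \<Rightarrow> 'b \<Rightarrow> 'd::{real_normed_vector, second_countable_topology}"
  assumes "simple_function N v" "\<And>c. c \<in> v ` space N \<Longrightarrow> \<phi> c \<in> borel_measurable N"
  shows "(\<lambda>x. \<phi> (v x) x) \<in> borel_measurable N"
proof -
  have "(\<lambda>x. \<Sum>c\<in>v ` space N. indicator {y\<in>space N. v y = c} x *\<^sub>R \<phi> c x) \<in> borel_measurable N"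
  proof (intro borel_measurable_sum borel_measurable_scaleR borel_measurable_indicator assms(2))
    fix c assume "c \<in> v ` space N"
    then have "v -` {c} \<inter> space N \<in> sets N" using simple_functionD(2)[OF assms(1)] by blast
    moreover have "{y\<in>space N. v y = c} = v -` {c} \<inter> space N" by auto
    ultimately show "{y\<in>space N. v y = c} \<in> sets N" by simp
  qed
  then show ?thesis by (rule measurable_cong[THEN iffD1, rotated]) (simp add: simple_rep[OF assms(1)])
qed

lemma tendsto_dominated:
  assumes "(f \<longlongrightarrow> l) G" "eventually (\<lambda>i. dist (g i) L \<le> dist (f i) l) G"
  shows "(g \<longlongrightarrow> L) G"
proof (rule tendstoI)
  fix r :: real assume "r > 0"
  with tendstoD[OF assms(1)] have "eventually (\<lambda>i. dist (f i) l < r) G" by blast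
  with assms(2) show "eventually (\<lambda>i. dist (g i) L < r) G"
    by eventually_elim (rule le_less_trans)
qed

lemma bcf_tendsto_apply:
  assumes "(f \<longlongrightarrow> (l :: 'a \<Rightarrow>\<^sub>C complex)) G"
  shows "((\<lambda>i. apply_bcontfun (f i) y) \<longlongrightarrow> apply_bcontfun l y) G"
  by (rule tendsto_dominated[OF assms]) (simp add: dist_bounded)

lemma approx_meas:
  assumes w: "\<And>n. simple_function MM (w n)" "\<And>n x. x \<in> \<Omega> \<Longrightarrow> w n x \<in> A"
    "\<And>x. x \<in> \<Omega> \<Longrightarrow> (\<lambda>n. w n x) \<longlonglongrightarrow> u x"
    and u: "\<And>x. x \<in> \<Omega> \<Longrightarrow> u x \<in> A"
  shows approx_meas_u: "u \<in> borel_measurable MM"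
    and approx_meas_weps: "\<epsilon> \<in> E \<Longrightarrow> (\<lambda>x. apply_bcontfun (w n x) (H \<epsilon> x)) \<in> borel_measurable MM"
    and approx_meas_ueps: "\<epsilon> \<in> E \<Longrightarrow> (\<lambda>x. apply_bcontfun (u x) (H \<epsilon> x)) \<in> borel_measurable MM"
    and approx_meas_Mw: "(\<lambda>x. Mv (w n x)) \<in> borel_measurable MM"
    and approx_meas_Mu: "(\<lambda>x. Mv (u x)) \<in> borel_measurable MM"
    and approx_meas_dist: "(\<lambda>x. dist (u x) (w n x)) \<in> borel_measurable MM"
proof -
  have wm: "w n \<in> borel_measurable MM" for n by (rule borel_measurable_simple_function[OF w(1)])
  show um: "u \<in> borel_measurable MM"
    by (rule borel_measurable_LIMSEQ_metric[OF wm]) (use w(3) in simp)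
  show we: "(\<lambda>x. apply_bcontfun (w n x) (H \<epsilon> x)) \<in> borel_measurable MM" if "\<epsilon> \<in> E" for n \<epsilon>
    using simple_meas[OF w(1), where \<phi>="\<lambda>c x. apply_bcontfun c (H \<epsilon> x)"] aeps_meas_MM[OF that] by blast
  show "(\<lambda>x. apply_bcontfun (u x) (H \<epsilon> x)) \<in> borel_measurable MM" if "\<epsilon> \<in> E"
  proof (rule borel_measurable_LIMSEQ_metric[OF we[OF that]])
    fix x assume "x \<in> space MM"
    then show "(\<lambda>i. apply_bcontfun (w i x) (H \<epsilon> x)) \<longlonglongrightarrow> apply_bcontfun (u x) (H \<epsilon> x)"
      using w(3) by (intro bcf_tendsto_apply) simp
  qed
  show mw: "(\<lambda>x. Mv (w n x)) \<in> borel_measurable MM" for n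
    using simple_meas[OF w(1), where \<phi>="\<lambda>c x. Mv c"] by simp
  show "(\<lambda>x. Mv (u x)) \<in> borel_measurable MM"
  proof (rule borel_measurable_LIMSEQ_metric[OF mw])
    fix x assume x: "x \<in> space MM"
    show "(\<lambda>i. Mv (w i x)) \<longlonglongrightarrow> Mv (u x)"
      by (rule tendsto_dominated[OF w(3)]) (use x w(2) u Mv_lip in \<open>auto simp: dist_norm\<close>)
  qed
  have dm: "(\<lambda>x. dist (u x) c) \<in> borel_measurable MM" for c
  proof -
    have "(\<lambda>y. dist y c) \<in> borel_measurable borel"
      by (rule borel_measurable_continuous_onI) (intro continuous_intros)
    from measurable_compose[OF um this] show ?thesis .
  qed
  show "(\<lambda>x. dist (u x) (w n x)) \<in> borel_measurable MM"
    using simple_meas[OF w(1), where \<phi>="\<lambda>c x. dist (u x) c"] dm by blast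
qed

lemma simple_case:
  assumes v: "simple_function MM v" "\<And>x. x \<in> \<Omega> \<Longrightarrow> v x \<in> A"
    and g: "g \<in> borel_measurable MM"
    and I: "\<And>c. c \<in> v ` \<Omega> \<Longrightarrow> c \<noteq> 0 \<Longrightarrow> integrable MM (\<lambda>x. indicator {y\<in>\<Omega>. v y = c} x *\<^sub>R g x)"
  shows simple_int: "\<epsilon> \<in> E \<Longrightarrow> integrable MM (\<lambda>x. g x * apply_bcontfun (v x) (H \<epsilon> x))"
    and simple_intM: "integrable MM (\<lambda>x. g x * Mv (v x))"
    and simple_lim: "((\<lambda>\<epsilon>. LINT x|MM. g x * apply_bcontfun (v x) (H \<epsilon> x)) \<longlongrightarrow> (LINT x|MM. g x * Mv (v x))) F"
proof -
  define R where "R = v ` \<Omega> - {0}"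
  define gc where "gc c x = indicator {y\<in>\<Omega>. v y = c} x *\<^sub>R g x" for c x
  have finR: "finite R" using simple_functionD(1)[OF v(1)] by (simp add: R_def)
  have RA: "c \<in> A" if "c \<in> R" for c using that v(2) by (auto simp: R_def)
  have gci: "integrable MM (gc c)" if "c \<in> R" for c
    using I[of c] that unfolding R_def gc_def by blast
  have rep: "g x * \<phi> (v x) x = (\<Sum>c\<in>R. gc c x * \<phi> c x)" if "x \<in> \<Omega>" "\<phi> 0 x = 0" for \<phi> :: "_ \<Rightarrow> _ \<Rightarrow> complex" and x
  proof -
    have "g x * \<phi> (v x) x = (\<Sum>c\<in>v ` space MM - {0}. indicator {y\<in>space MM. v y = c} x *\<^sub>R (g x * \<phi> c x))"
      by (rule simple_rep0[OF v(1), where \<phi>="\<lambda>c x. g x * \<phi> c x"]) (use that in auto)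
    also have "\<dots> = (\<Sum>c\<in>R. gc c x * \<phi> c x)"
      by (simp add: R_def gc_def scaleR_conv_of_real mult.assoc)
    finally show ?thesis .
  qed
  have repe: "g x * apply_bcontfun (v x) (H \<epsilon> x) = (\<Sum>c\<in>R. gc c x * apply_bcontfun c (H \<epsilon> x))" if "x \<in> \<Omega>" for x \<epsilon>
    using rep[OF that, of "\<lambda>c x. apply_bcontfun c (H \<epsilon> x)"] by simp
  have repM: "g x * Mv (v x) = (\<Sum>c\<in>R. gc c x * Mv c)" if "x \<in> \<Omega>" for x
    using rep[OF that, of "\<lambda>c x. Mv c"] Mv_zero by simp
  have ti: "integrable MM (\<lambda>x. gc c x * apply_bcontfun c (H \<epsilon> x))" if "c \<in> R" "\<epsilon> \<in> E" for c \<epsilon>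
    by (rule int_bounded[OF gci[OF that(1)] aeps_meas_MM[OF that(2)] bcf_norm])
  have tiM: "integrable MM (\<lambda>x. gc c x * Mv c)" if "c \<in> R" for c
    using gci[OF that] by simp
  show int: "integrable MM (\<lambda>x. g x * apply_bcontfun (v x) (H \<epsilon> x))" if "\<epsilon> \<in> E" for \<epsilon>
  proof -
    have "integrable MM (\<lambda>x. \<Sum>c\<in>R. gc c x * apply_bcontfun c (H \<epsilon> x))"
      by (rule Bochner_Integration.integrable_sum) (rule ti[OF _ that])
    moreover have "integrable MM (\<lambda>x. g x * apply_bcontfun (v x) (H \<epsilon> x)) \<longleftrightarrow> integrable MM (\<lambda>x. \<Sum>c\<in>R. gc c x * apply_bcontfun c (H \<epsilon> x))"
      by (rule Bochner_Integration.integrable_cong) (simp_all add: repe)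
    ultimately show ?thesis by simp
  qed
  show "integrable MM (\<lambda>x. g x * Mv (v x))"
  proof -
    have "integrable MM (\<lambda>x. \<Sum>c\<in>R. gc c x * Mv c)"
      by (rule Bochner_Integration.integrable_sum) (rule tiM)
    moreover have "integrable MM (\<lambda>x. g x * Mv (v x)) \<longleftrightarrow> integrable MM (\<lambda>x. \<Sum>c\<in>R. gc c x * Mv c)"
      by (rule Bochner_Integration.integrable_cong) (simp_all add: repM)
    ultimately show ?thesis by simp
  qed
  have eqe: "(LINT x|MM. g x * apply_bcontfun (v x) (H \<epsilon> x)) = (\<Sum>c\<in>R. LINT x|MM. gc c x * apply_bcontfun c (H \<epsilon> x))"
    if "\<epsilon> \<in> E" for \<epsilon>
  proof -
    have "(LINT x|MM. g x * apply_bcontfun (v x) (H \<epsilon> x)) = (LINT x|MM. (\<Sum>c\<in>R. gc c x * apply_bcontfun c (H \<epsilon> x)))"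
      by (rule Bochner_Integration.integral_cong[OF refl]) (simp add: repe)
    also have "\<dots> = (\<Sum>c\<in>R. LINT x|MM. gc c x * apply_bcontfun c (H \<epsilon> x))"
      by (rule Bochner_Integration.integral_sum) (rule ti[OF _ that])
    finally show ?thesis .
  qed
  have eqM: "(LINT x|MM. g x * Mv (v x)) = (\<Sum>c\<in>R. LINT x|MM. gc c x * Mv c)"
  proof -
    have "(LINT x|MM. g x * Mv (v x)) = (LINT x|MM. (\<Sum>c\<in>R. gc c x * Mv c))"
      by (rule Bochner_Integration.integral_cong[OF refl]) (simp add: repM)
    also have "\<dots> = (\<Sum>c\<in>R. LINT x|MM. gc c x * Mv c)"
      by (rule Bochner_Integration.integral_sum) (rule tiM)
    finally show ?thesis .
  qed
  have lim: "((\<lambda>\<epsilon>. \<Sum>c\<in>R. LINT x|MM. gc c x * apply_bcontfun c (H \<epsilon> x)) \<longlongrightarrow> (\<Sum>c\<in>R. LINT x|MM. gc c x * Mv c)) F"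
    by (rule tendsto_sum) (rule wstar_MM[OF RA gci])
  have ev: "eventually (\<lambda>\<epsilon>. (\<Sum>c\<in>R. LINT x|MM. gc c x * apply_bcontfun c (H \<epsilon> x)) = (LINT x|MM. g x * apply_bcontfun (v x) (H \<epsilon> x))) F"
    using eventually_in_E by eventually_elim (simp add: eqe)
  show "((\<lambda>\<epsilon>. LINT x|MM. g x * apply_bcontfun (v x) (H \<epsilon> x)) \<longlongrightarrow> (LINT x|MM. g x * Mv (v x))) F"
    unfolding eqM by (rule Lim_transform_eventually[OF lim ev])
qed

lemma core:
  assumes w: "\<And>n. simple_function MM (w n)" "\<And>n x. x \<in> \<Omega> \<Longrightarrow> w n x \<in> A"
      "\<And>x. x \<in> \<Omega> \<Longrightarrow> (\<lambda>n. w n x) \<longlonglongrightarrow> u x"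
    and u: "\<And>x. x \<in> \<Omega> \<Longrightarrow> u x \<in> A"
    and g: "g \<in> borel_measurable MM"
    and G: "integrable MM (\<lambda>x. norm (g x) * norm (u x))"
    and D: "integrable MM Dm" "\<And>n x. x \<in> \<Omega> \<Longrightarrow> norm (g x) * dist (u x) (w n x) \<le> Dm x"
    and I: "\<And>n c. c \<in> w n ` \<Omega> \<Longrightarrow> c \<noteq> 0 \<Longrightarrow> integrable MM (\<lambda>x. indicator {y\<in>\<Omega>. w n y = c} x *\<^sub>R g x)"
  shows core_int: "\<epsilon> \<in> E \<Longrightarrow> integrable MM (\<lambda>x. g x * apply_bcontfun (u x) (H \<epsilon> x))"
    and core_intM: "integrable MM (\<lambda>x. g x * Mv (u x))"
    and core_lim: "((\<lambda>\<epsilon>. LINT x|MM. g x * apply_bcontfun (u x) (H \<epsilon> x)) \<longlongrightarrow> (LINT x|MM. g x * Mv (u x))) F"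
proof -
  have am3: "(\<lambda>x. apply_bcontfun (u x) (H \<epsilon> x)) \<in> borel_measurable MM" if "\<epsilon> \<in> E" for \<epsilon>
    by (rule approx_meas_ueps[OF w(1) w(2) w(3) u that])
  have am5: "(\<lambda>x. Mv (u x)) \<in> borel_measurable MM"
    by (rule approx_meas_Mu[OF w(1) w(2) w(3) u])
  have am6: "(\<lambda>x. dist (u x) (w n x)) \<in> borel_measurable MM" for n
    by (rule approx_meas_dist[OF w(1) w(2) w(3) u])
  show ui: "integrable MM (\<lambda>x. g x * apply_bcontfun (u x) (H \<epsilon> x))" if "\<epsilon> \<in> E" for \<epsilon>
  proof (rule Bochner_Integration.integrable_bound[OF G])
    show "(\<lambda>x. g x * apply_bcontfun (u x) (H \<epsilon> x)) \<in> borel_measurable MM"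
      using g am3[OF that] by (rule borel_measurable_times)
    show "AE x in MM. norm (g x * apply_bcontfun (u x) (H \<epsilon> x)) \<le> norm (norm (g x) * norm (u x))"
      by (rule AE_I2) (simp add: norm_mult mult_left_mono bcf_norm)
  qed
  show ui2: "integrable MM (\<lambda>x. g x * Mv (u x))"
  proof (rule Bochner_Integration.integrable_bound[OF G])
    show "(\<lambda>x. g x * Mv (u x)) \<in> borel_measurable MM"
      using g am5 by (rule borel_measurable_times)
    show "AE x in MM. norm (g x * Mv (u x)) \<le> norm (norm (g x) * norm (u x))"
      by (rule AE_I2) (simp add: norm_mult mult_left_mono Mv_bound u)
  qed
  define s where "s n x = norm (g x) * dist (u x) (w n x)" for n x
  have sm: "s n \<in> borel_measurable MM" for n
    unfolding s_def using am6 g by measurable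
  have sconv: "(\<lambda>n. LINT x|MM. s n x) \<longlonglongrightarrow> (LINT x|MM. (\<lambda>x. 0::real) x)"
    and si: "\<And>n. integrable MM (s n)"
  proof -
    have lim0: "AE x in MM. (\<lambda>n. s n x) \<longlonglongrightarrow> 0"
    proof (rule AE_I2)
      fix x assume x: "x \<in> space MM"
      have "(\<lambda>n. dist (u x) (w n x)) \<longlonglongrightarrow> dist (u x) (u x)"
        using w(3) x by (intro tendsto_intros) auto
      then have "(\<lambda>n. norm (g x) * dist (u x) (w n x)) \<longlonglongrightarrow> norm (g x) * 0"
        by (intro tendsto_intros) simp
      then show "(\<lambda>n. s n x) \<longlonglongrightarrow> 0" by (simp add: s_def)
    qed
    have bnd: "AE x in MM. norm (s n x) \<le> Dm x" for n
      by (rule AE_I2) (use D(2) in \<open>simp add: s_def\<close>)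
    show "(\<lambda>n. LINT x|MM. s n x) \<longlonglongrightarrow> (LINT x|MM. (\<lambda>x. 0::real) x)"
      by (rule integral_dominated_convergence[OF _ sm D(1) lim0 bnd]) simp
    show "integrable MM (s n)" for n
      by (rule integrable_dominated_convergence2[OF _ sm D(1) lim0 bnd]) simp
  qed
  have bound: "norm ((LINT x|MM. g x * a x) - (LINT x|MM. g x * b x)) \<le> (LINT x|MM. s n x)"
    if ia: "integrable MM (\<lambda>x. g x * a x)" and ib: "integrable MM (\<lambda>x. g x * b x)"
      and ab: "\<And>x. x \<in> \<Omega> \<Longrightarrow> norm (a x - b x) \<le> dist (u x) (w n x)" for a b n
  proof -
    have "(LINT x|MM. g x * a x) - (LINT x|MM. g x * b x) = (LINT x|MM. g x * a x - g x * b x)"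
      using ia ib by simp
    also have "norm \<dots> \<le> (LINT x|MM. norm (g x * a x - g x * b x))" by (rule integral_norm_bound)
    also have "\<dots> \<le> (LINT x|MM. s n x)"
    proof (rule integral_mono)
      show "integrable MM (\<lambda>x. norm (g x * a x - g x * b x))" using ia ib by auto
      show "integrable MM (s n)" by (rule si)
      fix x assume x: "x \<in> space MM"
      have "norm (g x * a x - g x * b x) = norm (g x) * norm (a x - b x)"
        by (simp add: norm_mult right_diff_distrib[symmetric])
      also have "\<dots> \<le> s n x" unfolding s_def using ab x by (simp add: mult_left_mono)
      finally show "norm (g x * a x - g x * b x) \<le> s n x" .
    qed
    finally show ?thesis .
  qed
  show "((\<lambda>\<epsilon>. LINT x|MM. g x * apply_bcontfun (u x) (H \<epsilon> x)) \<longlongrightarrow> (LINT x|MM. g x * Mv (u x))) F"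
  proof (rule tendsto_approx)
    fix \<eta> :: real assume "\<eta> > 0"
    then have "eventually (\<lambda>n. dist (LINT x|MM. s n x) 0 < \<eta>) sequentially"
      using tendstoD[OF sconv] by simp
    then obtain n where n: "(LINT x|MM. s n x) < \<eta>"
      unfolding eventually_sequentially by (metis order_refl dist_real_def diff_zero abs_less_iff)
    have Iw: "\<And>c. c \<in> w n ` \<Omega> \<Longrightarrow> c \<noteq> 0 \<Longrightarrow> integrable MM (\<lambda>x. indicator {y\<in>\<Omega>. w n y = c} x *\<^sub>R g x)"
      by (rule I)
    have sc1: "integrable MM (\<lambda>x. g x * apply_bcontfun (w n x) (H \<epsilon> x))" if "\<epsilon> \<in> E" for \<epsilon>
      by (rule simple_int[where v="w n"]) (use w(1) w(2) g Iw that in auto)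
    have sc2: "integrable MM (\<lambda>x. g x * Mv (w n x))"
      by (rule simple_intM[where v="w n"]) (use w(1) w(2) g Iw in auto)
    have sc3: "((\<lambda>\<epsilon>. LINT x|MM. g x * apply_bcontfun (w n x) (H \<epsilon> x)) \<longlongrightarrow> (LINT x|MM. g x * Mv (w n x))) F"
      by (rule simple_lim[where v="w n"]) (use w(1) w(2) g Iw in auto)
    have ev: "eventually (\<lambda>\<epsilon>. norm ((LINT x|MM. g x * apply_bcontfun (u x) (H \<epsilon> x)) - (LINT x|MM. g x * apply_bcontfun (w n x) (H \<epsilon> x))) \<le> \<eta>) F"
      using eventually_in_E
    proof eventually_elim
      case (elim \<epsilon>)
      have "norm ((LINT x|MM. g x * apply_bcontfun (u x) (H \<epsilon> x)) - (LINT x|MM. g x * apply_bcontfun (w n x) (H \<epsilon> x))) \<le> (LINT x|MM. s n x)"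
        by (rule bound[OF ui[OF elim] sc1[OF elim]]) (metis dist_bounded dist_norm)
      then show ?case using n by simp
    qed
    have "norm ((LINT x|MM. g x * Mv (u x)) - (LINT x|MM. g x * Mv (w n x))) \<le> (LINT x|MM. s n x)"
      by (rule bound[OF ui2 sc2]) (simp add: Mv_lip u w(2))
    then have "norm ((LINT x|MM. g x * Mv (u x)) - (LINT x|MM. g x * Mv (w n x))) \<le> \<eta>" using n by simp
    with sc3 ev show "\<exists>fa La. (fa \<longlongrightarrow> La) F \<and> eventually (\<lambda>i. norm ((LINT x|MM. g x * apply_bcontfun (u x) (H i x)) - fa i) \<le> \<eta>) F
        \<and> norm ((LINT x|MM. g x * Mv (u x)) - La) \<le> \<eta>" by blast
  qed
qed

lemma part1:
  assumes u: "u \<in> Kc_vec \<Omega> A" and g: "integrable MM g"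
  shows "((\<lambda>\<epsilon>. LINT x|MM. g x * apply_bcontfun (u x) (H \<epsilon> x)) \<longlongrightarrow> (LINT x|MM. g x * Mv (u x))) F"
proof -
  obtain K where K: "compact K" "K \<subseteq> \<Omega>" "\<And>x. x \<in> \<Omega> - K \<Longrightarrow> u x = 0"
    using u unfolding Kc_vec_def by blast
  have uA: "\<And>x. x \<in> \<Omega> \<Longrightarrow> u x \<in> A" and uc: "continuous_on \<Omega> u"
    using u unfolding Kc_vec_def by blast+
  define C where "C = insert 0 (u ` K)"
  have Cc: "compact C" unfolding C_def
    using compact_continuous_image[OF continuous_on_subset[OF uc K(2)] K(1)] by simp
  have CA: "C \<subseteq> A" using uA K(2) A_zero by (auto simp: C_def)
  have uC: "u x \<in> C" if "x \<in> \<Omega>" for x using K(3)[of x] that by (cases "x \<in> K") (auto simp: C_def)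
  have "\<exists>cs. set cs \<subseteq> C \<and> C \<subseteq> (\<Union>c\<in>set cs. ball c (inverse (real (Suc n))))" for n
  proof -
    obtain C' where C': "C' \<subseteq> C" "finite C'" "C \<subseteq> (\<Union>c\<in>C'. ball c (inverse (real (Suc n))))"
      by (rule compactE_image[OF Cc, of C "\<lambda>c. ball c (inverse (real (Suc n)))"]) auto
    obtain cs where "set cs = C'" using finite_list[OF C'(2)] by blast
    then show ?thesis using C' by blast
  qed
  then have "\<exists>cs. \<forall>n. set (cs n) \<subseteq> C \<and> C \<subseteq> (\<Union>c\<in>set (cs n). ball c (inverse (real (Suc n))))"
    by (intro choice allI)
  then obtain cs where cs: "\<And>n. set (cs n) \<subseteq> C" "\<And>n. C \<subseteq> (\<Union>c\<in>set (cs n). ball c (inverse (real (Suc n))))"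
    by blast
  define w where "w n x = sel (inverse (real (Suc n))) (cs n) (u x)" for n x
  have um: "u \<in> borel_measurable MM" by (rule cont_meas_MM[OF uc])
  have wm: "w n \<in> borel_measurable MM" for n
    unfolding w_def using measurable_compose[OF um sel_meas] by simp
  have wr: "w n x \<in> insert 0 (set (cs n))" for n x unfolding w_def by (rule sel_in)
  have ws: "simple_function MM (w n)" for n
  proof (rule simple_function_borelI[OF wm])
    show "finite (w n ` space MM)" by (rule finite_subset[of _ "insert 0 (set (cs n))"]) (use wr in auto)
  qed
  have wA: "w n x \<in> A" for n x using wr[of n x] cs(1)[of n] CA A_zero by auto
  have wd: "dist (w n x) (u x) < inverse (real (Suc n))" if "x \<in> \<Omega>" for n x
  proof -
    have "u x \<in> (\<Union>c\<in>set (cs n). ball c (inverse (real (Suc n))))"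
      using cs(2)[of n] uC[OF that] by blast
    then obtain c where "c \<in> set (cs n)" "dist c (u x) < inverse (real (Suc n))" by auto
    then have "\<exists>c\<in>set (cs n). dist (u x) c < inverse (real (Suc n))"
      by (auto simp: dist_commute)
    then show ?thesis unfolding w_def by (rule sel_dist)
  qed
  have wl: "(\<lambda>n. w n x) \<longlonglongrightarrow> u x" if "x \<in> \<Omega>" for x
  proof (rule tendsto_dominated[OF LIMSEQ_inverse_real_of_nat], intro always_eventually allI)
    fix n
    have "dist (w n x) (u x) < inverse (real (Suc n))" by (rule wd[OF that])
    then show "dist (w n x) (u x) \<le> dist (inverse (real (Suc n))) 0" by simp
  qed
  obtain B where B: "\<And>y. y \<in> C \<Longrightarrow> norm y \<le> B"
    using compact_imp_bounded[OF Cc] unfolding bounded_iff by blast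
  have gm: "g \<in> borel_measurable MM" using g by simp
  have num: "(\<lambda>x. norm (u x)) \<in> borel_measurable MM" using um by measurable
  have G: "integrable MM (\<lambda>x. norm (g x) * norm (u x))"
  proof (rule Bochner_Integration.integrable_bound[where f="\<lambda>x. B * norm (g x)"])
    show "integrable MM (\<lambda>x. B * norm (g x))" using g by simp
    show "(\<lambda>x. norm (g x) * norm (u x)) \<in> borel_measurable MM" using gm num by measurable
    show "AE x in MM. norm (norm (g x) * norm (u x)) \<le> norm (B * norm (g x))"
    proof (rule AE_I2)
      fix x assume "x \<in> space MM"
      then have "norm (u x) \<le> B" using B uC by simp
      then have "norm (g x) * norm (u x) \<le> norm (g x) * B" by (rule mult_left_mono) simp
      then have "norm (g x) * norm (u x) \<le> B * norm (g x)" by (simp add: mult.commute)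
      then show "norm (norm (g x) * norm (u x)) \<le> norm (B * norm (g x))" by simp
    qed
  qed
  have D2: "norm (g x) * dist (u x) (w n x) \<le> norm (g x)" if "x \<in> \<Omega>" for n x
  proof -
    have i1: "inverse (real (Suc n)) \<le> 1" by (simp add: inverse_le_1_iff)
    have "dist (u x) (w n x) \<le> 1"
      using wd[OF that, of n] i1 by (simp add: dist_commute)
    then show ?thesis by (simp add: mult_left_le)
  qed
  have I: "integrable MM (\<lambda>x. indicator {y\<in>\<Omega>. w n y = c} x *\<^sub>R g x)" if "c \<in> w n ` \<Omega>" for n c
  proof (rule integrable_mult_indicator[OF _ g])
    have "w n -` {c} \<inter> space MM \<in> sets MM" by (rule measurable_sets[OF wm]) (simp add: borel_closed)
    moreover have "{y\<in>\<Omega>. w n y = c} = w n -` {c} \<inter> space MM" by auto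
    ultimately show "{y\<in>\<Omega>. w n y = c} \<in> sets MM" by simp
  qed
  show ?thesis
  proof (rule core_lim[where w=w and Dm="\<lambda>x. norm (g x)"])
    show "\<And>n. simple_function MM (w n)" by (rule ws)
    show "\<And>n x. x \<in> \<Omega> \<Longrightarrow> w n x \<in> A" by (rule wA)
    show "\<And>x. x \<in> \<Omega> \<Longrightarrow> (\<lambda>n. w n x) \<longlonglongrightarrow> u x" by (rule wl)
    show "\<And>x. x \<in> \<Omega> \<Longrightarrow> u x \<in> A" by (rule uA)
    show "g \<in> borel_measurable MM" by (rule gm)
    show "integrable MM (\<lambda>x. norm (g x) * norm (u x))" by (rule G)
    show "integrable MM (\<lambda>x. norm (g x))" using g by simp
    show "\<And>n x. x \<in> \<Omega> \<Longrightarrow> norm (g x) * dist (u x) (w n x) \<le> norm (g x)" by (rule D2)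
    show "\<And>n c. c \<in> w n ` \<Omega> \<Longrightarrow> c \<noteq> 0 \<Longrightarrow> integrable MM (\<lambda>x. indicator {y\<in>\<Omega>. w n y = c} x *\<^sub>R g x)"
      by (rule I)
  qed
qed

lemma part2_approx:
  assumes uA: "\<And>x. x \<in> \<Omega> \<Longrightarrow> u x \<in> A"
    and s: "\<And>n. simple_function MM (s n)" "\<And>x. x \<in> \<Omega> \<Longrightarrow> (\<lambda>n. s n x) \<longlonglongrightarrow> u x"
  obtains w where "\<And>n. simple_function MM (w n)" "\<And>n x. w n x \<in> A"
    "\<And>x. x \<in> \<Omega> \<Longrightarrow> (\<lambda>n. w n x) \<longlonglongrightarrow> u x" "\<And>n x. norm (w n x) \<le> 2 * norm (u x)"
proof -
  have um: "u \<in> borel_measurable MM"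
    by (rule borel_measurable_LIMSEQ_metric[OF borel_measurable_simple_function[OF s(1)]]) (use s(2) in simp)
  define pk where "pk n c = (SOME a. a \<in> A \<and> dist a c < infdist c A + inverse (real (Suc n)))" for n c
  have pk: "pk n c \<in> A \<and> dist (pk n c) c < infdist c A + inverse (real (Suc n))" for n c
  proof -
    have "\<exists>a. a \<in> A \<and> dist a c < infdist c A + inverse (real (Suc n))"
      using near_point[of A "inverse (real (Suc n))" c] A_zero by auto
    then show ?thesis unfolding pk_def by (rule someI_ex)
  qed
  define t where "t n = pk n \<circ> s n" for n
  have ts: "simple_function MM (t n)" for n unfolding t_def by (rule simple_function_compose[OF s(1)])
  have tm: "t n \<in> borel_measurable MM" for n by (rule borel_measurable_simple_function[OF ts])
  have tA: "t n x \<in> A" for n x using pk by (simp add: t_def)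
  have tl: "(\<lambda>n. t n x) \<longlonglongrightarrow> u x" if x: "x \<in> \<Omega>" for x
  proof -
    have lim: "(\<lambda>n. 2 * dist (s n x) (u x) + inverse (real (Suc n))) \<longlonglongrightarrow> 2 * dist (u x) (u x) + 0"
      using s(2)[OF x] by (intro tendsto_intros LIMSEQ_inverse_real_of_nat) auto
    show ?thesis
    proof (rule tendsto_dominated[OF lim], intro always_eventually allI)
      fix n
      have "dist (t n x) (u x) \<le> dist (t n x) (s n x) + dist (s n x) (u x)" by (rule dist_triangle)
      also have "dist (t n x) (s n x) < infdist (s n x) A + inverse (real (Suc n))"
        using pk by (simp add: t_def)
      also have "infdist (s n x) A \<le> dist (s n x) (u x)" by (rule infdist_le[OF uA[OF x]])
      finally have "dist (t n x) (u x) \<le> 2 * dist (s n x) (u x) + inverse (real (Suc n))" by simp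
      then show "dist (t n x) (u x) \<le> dist (2 * dist (s n x) (u x) + inverse (real (Suc n))) (2 * dist (u x) (u x) + 0)"
        by (simp add: dist_real_def)
    qed
  qed
  define w where "w n x = (if norm (t n x) \<le> 2 * norm (u x) then t n x else 0)" for n x
  have wm: "w n \<in> borel_measurable MM" for n
  proof -
    have "{x \<in> space MM. norm (t n x) \<le> 2 * norm (u x)} \<in> sets MM"
      using tm um by measurable
    then have "(\<lambda>x. if norm (t n x) \<le> 2 * norm (u x) then t n x else 0) \<in> borel_measurable MM"
      by (intro measurable_If tm measurable_const) auto
    then show ?thesis by (simp add: w_def[abs_def])
  qed
  have ws: "simple_function MM (w n)" for n
  proof (rule simple_function_borelI[OF wm])
    have "w n ` space MM \<subseteq> insert 0 (t n ` space MM)" by (auto simp: w_def)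
    moreover have "finite (t n ` space MM)" by (rule simple_functionD(1)[OF ts])
    ultimately show "finite (w n ` space MM)" using finite_subset by blast
  qed
  have wA: "w n x \<in> A" for n x using tA A_zero by (simp add: w_def)
  have wb: "norm (w n x) \<le> 2 * norm (u x)" for n x by (simp add: w_def)
  have wl: "(\<lambda>n. w n x) \<longlonglongrightarrow> u x" if x: "x \<in> \<Omega>" for x
  proof (cases "u x = 0")
    case True
    then have "w n x = 0" for n by (simp add: w_def)
    then show ?thesis using True by simp
  next
    case False
    have "(\<lambda>n. norm (t n x)) \<longlonglongrightarrow> norm (u x)" using tl[OF x] by (rule tendsto_norm)
    moreover have "norm (u x) < 2 * norm (u x)" using False by simp
    ultimately have "eventually (\<lambda>n. norm (t n x) < 2 * norm (u x)) sequentially"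
      by (rule order_tendstoD(2))
    then have "eventually (\<lambda>n. t n x = w n x) sequentially"
      by eventually_elim (simp add: w_def)
    then show ?thesis by (rule Lim_transform_eventually[OF tl[OF x]])
  qed
  show ?thesis by (rule that[OF ws wA wl wb])
qed

lemma part2:
  assumes p: "1 \<le> p" and u: "u \<in> Lp_vec MM p A"
  shows "(\<forall>\<epsilon>\<in>E. in_Lp MM p (\<lambda>x. apply_bcontfun (u x) (H \<epsilon> x))) \<and>
    weak_Lp_tendsto MM p (\<lambda>\<epsilon> x. apply_bcontfun (u x) (H \<epsilon> x)) (\<lambda>x. Mv (u x)) F"
proof -
  have uA: "\<And>x. x \<in> \<Omega> \<Longrightarrow> u x \<in> A" using u by (simp add: Lp_vec_def)
  obtain s where s: "\<And>n. simple_function MM (s n)" "\<And>x. x \<in> \<Omega> \<Longrightarrow> (\<lambda>n. s n x) \<longlonglongrightarrow> u x"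
    using u unfolding Lp_vec_def by auto
  have ui: "integrable MM (\<lambda>x. norm (u x) powr p)" using u by (simp add: Lp_vec_def)
  obtain w where w: "\<And>n. simple_function MM (w n)" "\<And>n x. w n x \<in> A"
    "\<And>x. x \<in> \<Omega> \<Longrightarrow> (\<lambda>n. w n x) \<longlonglongrightarrow> u x" "\<And>n x. norm (w n x) \<le> 2 * norm (u x)"
    by (rule part2_approx[where u=u and s=s]) (use uA s in auto)
  have w2: "\<And>n x. x \<in> \<Omega> \<Longrightarrow> w n x \<in> A" using w(2) by blast
  have um: "u \<in> borel_measurable MM" by (rule approx_meas_u[OF w(1) w2 w(3) uA])
  have num: "(\<lambda>x. norm (u x)) \<in> borel_measurable MM" using um by measurable
  have ue: "(\<lambda>x. apply_bcontfun (u x) (H \<epsilon> x)) \<in> borel_measurable MM" if "\<epsilon> \<in> E" for \<epsilon>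
    by (rule approx_meas_ueps[OF w(1) w2 w(3) uA that])
  have part_a: "\<forall>\<epsilon>\<in>E. in_Lp MM p (\<lambda>x. apply_bcontfun (u x) (H \<epsilon> x))"
  proof
    fix \<epsilon> assume e: "\<epsilon> \<in> E"
    have "integrable MM (\<lambda>x. norm (apply_bcontfun (u x) (H \<epsilon> x)) powr p)"
    proof (rule Bochner_Integration.integrable_bound[OF ui])
      show "(\<lambda>x. norm (apply_bcontfun (u x) (H \<epsilon> x)) powr p) \<in> borel_measurable MM"
        using ue[OF e] by measurable
      show "AE x in MM. norm (norm (apply_bcontfun (u x) (H \<epsilon> x)) powr p) \<le> norm (norm (u x) powr p)"
      proof (rule AE_I2)
        fix x
        have "norm (apply_bcontfun (u x) (H \<epsilon> x)) powr p \<le> norm (u x) powr p"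
          using p by (intro powr_mono2) (auto simp: bcf_norm)
        then show "norm (norm (apply_bcontfun (u x) (H \<epsilon> x)) powr p) \<le> norm (norm (u x) powr p)" by simp
      qed
    qed
    then show "in_Lp MM p (\<lambda>x. apply_bcontfun (u x) (H \<epsilon> x))" using ue[OF e] by (simp add: in_Lp_def)
  qed
  have part_b: "weak_Lp_tendsto MM p (\<lambda>\<epsilon> x. apply_bcontfun (u x) (H \<epsilon> x)) (\<lambda>x. Mv (u x)) F"
    unfolding weak_Lp_tendsto_def
  proof (intro allI impI)
    fix g assume gL: "in_Lconj MM p g"
    have gm: "g \<in> borel_measurable MM" using gL by (simp add: in_Lconj_def)
    have G: "integrable MM (\<lambda>x. norm (g x) * norm (u x))"
      by (rule LC[OF p gL num _ ui]) simp
    have D2: "norm (g x) * dist (u x) (w n x) \<le> 3 * (norm (g x) * norm (u x))" for n x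
    proof -
      have "dist (u x) (w n x) \<le> norm (u x) + norm (w n x)" unfolding dist_norm by (rule norm_triangle_ineq4)
      also have "\<dots> \<le> 3 * norm (u x)" using w(4)[of n x] by simp
      finally have "norm (g x) * dist (u x) (w n x) \<le> norm (g x) * (3 * norm (u x))"
        by (rule mult_left_mono) simp
      then show ?thesis by (simp add: mult.left_commute)
    qed
    have I: "integrable MM (\<lambda>x. indicator {y\<in>\<Omega>. w n y = c} x *\<^sub>R g x)" if c: "c \<in> w n ` \<Omega>" "c \<noteq> 0" for n c
    proof -
      define B where "B = {y\<in>\<Omega>. w n y = c}"
      have Bs: "B \<in> sets MM"
      proof -
        have "w n -` {c} \<inter> space MM \<in> sets MM"
          by (rule measurable_sets[OF borel_measurable_simple_function[OF w(1)]]) (simp add: borel_closed)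
        moreover have "B = w n -` {c} \<inter> space MM" by (auto simp: B_def)
        ultimately show ?thesis by simp
      qed
      have nc: "norm c > 0" using c(2) by simp
      define K where "K = (2 / norm c) powr p"
      have ib: "indicator B x \<le> K * norm (u x) powr p" for x
      proof (cases "x \<in> B")
        case True
        then have "norm c \<le> 2 * norm (u x)" using w(4)[of n x] by (simp add: B_def)
        then have "1 \<le> (2 / norm c) * norm (u x)" using nc by (simp add: field_simps)
        then have "1 \<le> ((2 / norm c) * norm (u x)) powr p" using p by (intro ge_one_powr_ge_zero) auto
        moreover have "((2 / norm c) * norm (u x)) powr p = (2 / norm c) powr p * norm (u x) powr p"
          by (rule powr_mult)
        ultimately show ?thesis using True unfolding K_def by simp
      next
        case False
        then show ?thesis by (simp add: K_def)
      qed
      have ii: "integrable MM (indicator B :: _ \<Rightarrow> real)"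
      proof (rule Bochner_Integration.integrable_bound[where f="\<lambda>x. K * norm (u x) powr p"])
        show "integrable MM (\<lambda>x. K * norm (u x) powr p)" using ui by simp
        show "(indicator B :: _ \<Rightarrow> real) \<in> borel_measurable MM" using Bs by simp
        show "AE x in MM. norm (indicator B x :: real) \<le> norm (K * norm (u x) powr p)"
          by (rule AE_I2) (use ib in \<open>auto intro: order_trans[OF _ abs_ge_self]\<close>)
      qed
      have iip: "integrable MM (\<lambda>x. (indicator B x :: real) powr p)"
      proof -
        have "(\<lambda>x. (indicator B x :: real) powr p) = indicator B" using p
          by (auto simp: fun_eq_iff split: split_indicator)
        then show ?thesis using ii by simp
      qed
      have "integrable MM (\<lambda>x. norm (g x) * indicator B x)"
        by (rule LC[OF p gL _ _ iip]) (use Bs in auto)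
      then have "integrable MM (\<lambda>x. indicator B x *\<^sub>R g x)"
      proof (rule Bochner_Integration.integrable_bound)
        show "(\<lambda>x. indicator B x *\<^sub>R g x) \<in> borel_measurable MM" using Bs gm by measurable
        show "AE x in MM. norm (indicator B x *\<^sub>R g x) \<le> norm (norm (g x) * indicator B x)"
          by (rule AE_I2) (simp split: split_indicator)
      qed
      then show ?thesis by (simp add: B_def)
    qed
    have "((\<lambda>\<epsilon>. LINT x|MM. g x * apply_bcontfun (u x) (H \<epsilon> x)) \<longlongrightarrow> (LINT x|MM. g x * Mv (u x))) F"
    proof (rule core_lim[where w=w and Dm="\<lambda>x. 3 * (norm (g x) * norm (u x))"])
      show "\<And>n. simple_function MM (w n)" by (rule w(1))
      show "\<And>n x. x \<in> \<Omega> \<Longrightarrow> w n x \<in> A" by (rule w2)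
      show "\<And>x. x \<in> \<Omega> \<Longrightarrow> (\<lambda>n. w n x) \<longlonglongrightarrow> u x" by (rule w(3))
      show "\<And>x. x \<in> \<Omega> \<Longrightarrow> u x \<in> A" by (rule uA)
      show "g \<in> borel_measurable MM" by (rule gm)
      show "integrable MM (\<lambda>x. norm (g x) * norm (u x))" by (rule G)
      show "integrable MM (\<lambda>x. 3 * (norm (g x) * norm (u x)))" using G by simp
      show "\<And>n x. x \<in> \<Omega> \<Longrightarrow> norm (g x) * dist (u x) (w n x) \<le> 3 * (norm (g x) * norm (u x))" by (rule D2)
      show "\<And>n c. c \<in> w n ` \<Omega> \<Longrightarrow> c \<noteq> 0 \<Longrightarrow> integrable MM (\<lambda>x. indicator {y\<in>\<Omega>. w n y = c} x *\<^sub>R g x)"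
        by (rule I)
    qed
    then show "((\<lambda>\<epsilon>. LINT x|MM. apply_bcontfun (u x) (H \<epsilon> x) * g x) \<longlongrightarrow> (LINT x|MM. Mv (u x) * g x)) F"
      by (simp add: mult.commute)
  qed
  show ?thesis using part_a part_b by blast
qed

end

theorem proposition4p2:
  fixes E :: "real set" and mul :: "real \<Rightarrow> real \<Rightarrow> real" and e :: real
    and H :: "real \<Rightarrow> 'a::{t2_space,first_countable_topology} \<Rightarrow> 'a"
    and lam :: "'a measure" and \<Omega> :: "'a set" and A :: "('a \<Rightarrow>\<^sub>C complex) set"
  assumes hom: "homogenizer E mul e H lam"
    and \<Omega>: "open \<Omega>" "\<Omega> \<noteq> {}"
    and A: "closed_complex_subspace A" "A \<subseteq> Pi_inf E H lam"
  shows
    "(\<forall>u \<in> Kc_vec \<Omega> A.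
        wstar_tendsto (restrict_space lam \<Omega>) (\<lambda>\<epsilon> x. apply_bcontfun (u x) (H \<epsilon> x))
          (\<lambda>x. mean_value E H lam (u x)) (to_theta E))
     \<and>
     (\<forall>p::real. 1 \<le> p \<longrightarrow> (\<forall>u \<in> Lp_vec (restrict_space lam \<Omega>) p A.
        (\<forall>\<epsilon>\<in>E. in_Lp (restrict_space lam \<Omega>) p (\<lambda>x. apply_bcontfun (u x) (H \<epsilon> x))) \<and>
        weak_Lp_tendsto (restrict_space lam \<Omega>) p (\<lambda>\<epsilon> x. apply_bcontfun (u x) (H \<epsilon> x))
          (\<lambda>x. mean_value E H lam (u x)) (to_theta E)))"
proof -
  interpret PS E mul e H lam \<Omega> A
    by (rule PS.intro) (fact hom \<Omega>(1) A(1) A(2))+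
  show ?thesis
  proof (rule conjI)
    show "\<forall>u \<in> Kc_vec \<Omega> A.
        wstar_tendsto (restrict_space lam \<Omega>) (\<lambda>\<epsilon> x. apply_bcontfun (u x) (H \<epsilon> x))
          (\<lambda>x. mean_value E H lam (u x)) (to_theta E)"
    proof
      fix u assume u: "u \<in> Kc_vec \<Omega> A"
      show "wstar_tendsto (restrict_space lam \<Omega>) (\<lambda>\<epsilon> x. apply_bcontfun (u x) (H \<epsilon> x))
          (\<lambda>x. mean_value E H lam (u x)) (to_theta E)"
        unfolding wstar_tendsto_def by (intro allI impI) (rule part1[OF u])
    qed
    show "\<forall>p::real. 1 \<le> p \<longrightarrow> (\<forall>u \<in> Lp_vec (restrict_space lam \<Omega>) p A.
        (\<forall>\<epsilon>\<in>E. in_Lp (restrict_space lam \<Omega>) p (\<lambda>x. apply_bcontfun (u x) (H \<epsilon> x))) \<and>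
        weak_Lp_tendsto (restrict_space lam \<Omega>) p (\<lambda>\<epsilon> x. apply_bcontfun (u x) (H \<epsilon> x))
          (\<lambda>x. mean_value E H lam (u x)) (to_theta E))"
      by (intro allI impI ballI) (rule part2; assumption)
  qed
qed

end
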